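(* Let $Q:\mathcal{Z}\times\Theta\to\mathbb{R}$ be any measurable function such that $A(\theta)=EQ(Z,\theta)$ exists for all $\theta\in\Theta$ and $A(e_1),\dots,A(e_M)$ are finite, and let $\beta>0$. Let $\hat\theta_n$ be the mirror averaging aggregate with parameter $\beta$. Then for all $M\ge 2$, $n\ge 1$, $$E_{n-1}A(\hat\theta_n)\le \min_{1\le j\le M}A(e_j)+\frac{\beta\log M}{n}+S_1,$$ where $$S_1=\beta\,E_n\log\Big(\sum_{j=1}^M\hat\theta_n^{(j)}\exp\Big[-\frac{Q(Z_n,e_j)-Q(Z_n,\hat\theta_n)}{\beta}\Big]\Big).$$
   Context: $(\mathcal{Z},\mathfrak{F})$ is a measurable space, $M\ge2$, $\Theta=\{\theta\in\mathbb{R}^M:\sum_j\theta^{(j)}=1,\theta^{(j)}\ge0\}$, $e_j$ is the $j$th unit vector of $\mathbb{R}^M$, and $z^{(j)}$ denotes the $j$th component of $z\in\mathbb{R}^M$. $Z$ is a $\mathcal{Z}$-valued random variable with distribution $P$ and expectation $E$; $Z_1,\dots,Z_n$ are i.i.d. copies of $Z$. $E_n$ (resp. $E_{n-1}$) denotes expectation with respect to $(Z_1,\dots,Z_n)$ (resp. $(Z_1,\dots,Z_{n-1})$). Mirror averaging aggregate with parameter $\beta>0$: define $W_\beta(\zeta)=\beta\log\big(\frac1M\sum_{j=1}^Me^{-\zeta^{(j)}/\beta}\big)$ for $\zeta\in\mathbb{R}^M$; put $\zeta_0=0\in\mathbb{R}^M$ and, for $i=1,\dots,n-1$, $\zeta_i=\zeta_{i-1}+u_i$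 where $u_i=(Q(Z_i,e_1),\dots,Q(Z_i,e_M))^\top$; for $i=0,\dots,n-1$ let $\theta_i=-\nabla W_\beta(\zeta_i)$, i.e. $\theta_i^{(j)}=e^{-\zeta_i^{(j)}/\beta}/\sum_{k=1}^Me^{-\zeta_i^{(k)}/\beta}$ (so $\theta_0=(1/M,\dots,1/M)$); and set $\hat\theta_n=\frac1n\sum_{i=1}^n\theta_{i-1}$, which is a function of $Z_1,\dots,Z_{n-1}$. *)

theory Defs
  imports "HOL-Probability.Probability"
begin

unbundle vec_syntax

definition prob_simplex :: "(real^'m) set" where
  "prob_simplex = {\<theta>. (\<forall>j. 0 \<le> \<theta> $ j) \<and> (\<Sum>j\<in>UNIV. \<theta> $ j) = 1}"

definition eexp :: "'a measure \<Rightarrow> ('a \<Rightarrow> ereal) \<Rightarrow> ereal" where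
  "eexp M f = enn2ereal (\<integral>\<^sup>+ x. e2ennreal (f x) \<partial>M) - enn2ereal (\<integral>\<^sup>+ x. e2ennreal (- f x) \<partial>M)"

definition eexp_exists :: "'a measure \<Rightarrow> ('a \<Rightarrow> ereal) \<Rightarrow> bool" where
  "eexp_exists M f \<longleftrightarrow> (\<integral>\<^sup>+ x. e2ennreal (f x) \<partial>M) < \<infinity> \<or> (\<integral>\<^sup>+ x. e2ennreal (- f x) \<partial>M) < \<infinity>"

definition risk :: "'z measure \<Rightarrow> ('z \<Rightarrow> real^'m \<Rightarrow> real) \<Rightarrow> real^'m \<Rightarrow> ereal" where
  "risk P Q \<theta> = eexp P (\<lambda>z. ereal (Q z \<theta>))"

text \<open>zeta_i = sum_{k=1}^i u_k with u_k = (Q(Z_k,e_1),...,Q(Z_k,e_M)); the sample is omega.\<close>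
definition zeta :: "('z \<Rightarrow> real^'m \<Rightarrow> real) \<Rightarrow> (nat \<Rightarrow> 'z) \<Rightarrow> nat \<Rightarrow> real^'m" where
  "zeta Q \<omega> i = (\<chi> j. \<Sum>k\<in>{1..i}. Q (\<omega> k) (axis j 1))"

text \<open>theta_i = - grad W_beta(zeta_i).\<close>
definition theta_md :: "real \<Rightarrow> ('z \<Rightarrow> real^'m \<Rightarrow> real) \<Rightarrow> (nat \<Rightarrow> 'z) \<Rightarrow> nat \<Rightarrow> real^'m" where
  "theta_md \<beta> Q \<omega> i =
     (\<chi> j. exp (- (zeta Q \<omega> i $ j) / \<beta>) / (\<Sum>k\<in>UNIV. exp (- (zeta Q \<omega> i $ k) / \<beta>)))"

definition mirror_avg :: "real \<Rightarrow> ('z \<Rightarrow> real^'m \<Rightarrow> real) \<Rightarrow> nat \<Rightarrow> (nat \<Rightarrow> 'z) \<Rightarrow> real^'m" where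
  "mirror_avg \<beta> Q n \<omega> = (1 / real n) *\<^sub>R (\<Sum>i\<in>{1..n}. theta_md \<beta> Q \<omega> (i - 1))"

end

theory Submission
  imports Defs
begin



lemma vec_meas[measurable (raw)]:
  fixes f :: "'a \<Rightarrow> 'm::finite \<Rightarrow> real"
  assumes "\<And>j. (\<lambda>x. f x j) \<in> borel_measurable M"
  shows "(\<lambda>x. (\<chi> j. f x j) :: real^'m) \<in> borel_measurable M"
proof (rule borel_measurable_euclidean_space[THEN iffD2], intro ballI)
  fix b :: "real^'m" assume "b \<in> Basis"
  then obtain i where b: "b = axis i 1" by (auto simp: Basis_vec_def)
  have "(\<lambda>x. (\<chi> j. f x j) \<bullet> b) = (\<lambda>x. f x i)" by (simp add: b inner_axis)
  then show "(\<lambda>x. (\<chi> j. f x j) \<bullet> b) \<in> borel_measurable M" using assms[of i] by metis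
qed

lemma q_meas:
  fixes P :: "'z measure" and Q :: "'z \<Rightarrow> real^'m \<Rightarrow> real"
  assumes "(\<lambda>(z, \<theta>). Q z \<theta>) \<in> borel_measurable (P \<Otimes>\<^sub>M restrict_space borel (prob_simplex :: (real^'m) set))"
    and "\<theta> \<in> prob_simplex"
  shows "(\<lambda>z. Q z \<theta>) \<in> borel_measurable P"
proof -
  have "(\<lambda>z. (z, \<theta>)) \<in> measurable P (P \<Otimes>\<^sub>M restrict_space borel (prob_simplex :: (real^'m) set))"
    using assms(2) by (auto intro!: measurable_Pair simp: space_restrict_space)
  from measurable_comp[OF this assms(1)] show ?thesis by (simp add: o_def)
qed

lemma axis_simplex: "axis j 1 \<in> prob_simplex"
  by (auto simp: prob_simplex_def axis_def)

lemma zeta_meas: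
  fixes Q :: "'z \<Rightarrow> real^'m \<Rightarrow> real"
  assumes "\<And>j. (\<lambda>z. Q z (axis j 1)) \<in> borel_measurable P" "{1..i} \<subseteq> I"
  shows "(\<lambda>\<omega>. zeta Q \<omega> i $ j) \<in> borel_measurable (PiM I (\<lambda>_. P))"
  unfolding zeta_def vec_lambda_beta
proof (intro borel_measurable_sum)
  fix k assume "k \<in> {1..i}"
  then have "k \<in> I" using assms by auto
  then show "(\<lambda>x. Q (x k) (axis j 1)) \<in> borel_measurable (PiM I (\<lambda>_. P))"
    using assms(1) by measurable
qed

lemma theta_meas:
  fixes Q :: "'z \<Rightarrow> real^'m \<Rightarrow> real"
  assumes "\<And>j. (\<lambda>z. Q z (axis j 1)) \<in> borel_measurable P" "{1..i} \<subseteq> I"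
  shows "(\<lambda>\<omega>. theta_md \<beta> Q \<omega> i) \<in> borel_measurable (PiM I (\<lambda>_. P))"
proof -
  have z[measurable]: "(\<lambda>\<omega>. zeta Q \<omega> i $ j) \<in> borel_measurable (PiM I (\<lambda>_. P))" for j
    using zeta_meas[of Q P i I j] assms by blast
  show ?thesis unfolding theta_md_def
    by (intro vec_meas) measurable
qed

lemma mavg_meas:
  fixes Q :: "'z \<Rightarrow> real^'m \<Rightarrow> real"
  assumes "\<And>j. (\<lambda>z. Q z (axis j 1)) \<in> borel_measurable P" "{1..<n} \<subseteq> I"
  shows "(\<lambda>\<omega>. mirror_avg \<beta> Q n \<omega>) \<in> borel_measurable (PiM I (\<lambda>_. P))"
  unfolding mirror_avg_def
proof (intro borel_measurable_scaleR borel_measurable_const borel_measurable_sum theta_meas assms(1))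
  fix i assume "i \<in> {1..n}"
  then have "{1..i - 1} \<subseteq> {1..<n}" by auto
  then show "{1..i - 1} \<subseteq> I" using assms(2) by blast
qed

lemma theta_simplex: "theta_md \<beta> Q \<omega> i \<in> prob_simplex"
proof -
  have pos: "(\<Sum>k\<in>UNIV. exp (- (zeta Q \<omega> i $ k) / \<beta>)) > 0"
    by (intro sum_pos) auto
  show ?thesis unfolding prob_simplex_def theta_md_def
    using pos by (auto simp: sum_divide_distrib[symmetric])
qed

lemma mavg_nth: "mirror_avg \<beta> Q n \<omega> $ j = (\<Sum>i = 1..n. theta_md \<beta> Q \<omega> (i - 1) $ j) / real n"
  unfolding mirror_avg_def vector_scaleR_component sum_component by simp

lemma mavg_simplex:
  assumes "n \<ge> 1" shows "mirror_avg \<beta> Q n \<omega> \<in> prob_simplex"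
proof -
  have "\<forall>j. 0 \<le> theta_md \<beta> Q \<omega> i $ j" "(\<Sum>j\<in>UNIV. theta_md \<beta> Q \<omega> i $ j) = 1" for i
    using theta_simplex[of \<beta> Q \<omega> i] by (auto simp: prob_simplex_def)
  note h = this
  have "(\<Sum>j\<in>UNIV. (\<Sum>i = 1..n. theta_md \<beta> Q \<omega> (i - 1) $ j) / real n)
     = (\<Sum>i = 1..n. (\<Sum>j\<in>UNIV. theta_md \<beta> Q \<omega> (i - 1) $ j)) / real n"
    by (simp add: sum_divide_distrib[symmetric] sum.swap[of _ UNIV])
  also have "\<dots> = 1" using h assms by simp
  finally have s1: "(\<Sum>j\<in>UNIV. (\<Sum>i = 1..n. theta_md \<beta> Q \<omega> (i - 1) $ j) / real n) = 1" .
  have "0 \<le> (\<Sum>i = 1..n. theta_md \<beta> Q \<omega> (i - 1) $ j) / real n" for j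
    using h by (intro divide_nonneg_nonneg sum_nonneg) auto
  then show ?thesis using s1 unfolding prob_simplex_def
    by (simp add: mavg_nth)
qed



lemma simplex_pos_sum:
  fixes w :: "real^'m"
  assumes "w \<in> prob_simplex" "\<And>j. e j > 0"
  shows "(\<Sum>j\<in>UNIV. w $ j * e j) > 0"
proof -
  have w0: "\<And>j. 0 \<le> w $ j" and w1: "(\<Sum>j\<in>UNIV. w $ j) = 1" using assms(1) by (auto simp: prob_simplex_def)
  obtain j where "w $ j > 0"
  proof (rule ccontr)
    assume "\<not> thesis"
    then have "\<forall>j. w $ j \<le> 0" using that by (meson not_le)
    then have "(\<Sum>j\<in>UNIV. w $ j) \<le> 0" by (simp add: sum_nonpos)
    with w1 show False by simp
  qed
  then show ?thesis
    using assms(2)[of j] by (intro sum_pos2[of UNIV j]) (auto intro!: mult_nonneg_nonneg w0 less_imp_le[OF assms(2)])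
qed

lemma softmin_bound:
  fixes w :: "real^'m" and x :: "'m \<Rightarrow> real"
  assumes "w \<in> prob_simplex" "\<beta> > 0"
  shows "\<bar>\<beta> * ln (\<Sum>j\<in>UNIV. w $ j * exp (- x j / \<beta>))\<bar> \<le> (\<Sum>j\<in>UNIV. \<bar>x j\<bar>)"
proof -
  define B where "B = (\<Sum>j\<in>UNIV. \<bar>x j\<bar>)"
  have w0: "\<And>j. 0 \<le> w $ j" and w1: "(\<Sum>j\<in>UNIV. w $ j) = 1" using assms(1) by (auto simp: prob_simplex_def)
  have xb: "\<bar>x j\<bar> \<le> B" for j unfolding B_def by (rule member_le_sum) auto
  have lo: "exp (- B / \<beta>) \<le> exp (- x j / \<beta>)" for j
  proof -
    have "- B / \<beta> \<le> - x j / \<beta>" using xb[of j] assms(2) by (intro divide_right_mono) auto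
    then show ?thesis by simp
  qed
  have hi: "exp (- x j / \<beta>) \<le> exp (B / \<beta>)" for j
  proof -
    have "- x j / \<beta> \<le> B / \<beta>" using xb[of j] assms(2) by (intro divide_right_mono) auto
    then show ?thesis by simp
  qed
  define s where "s = (\<Sum>j\<in>UNIV. w $ j * exp (- x j / \<beta>))"
  have "(\<Sum>j\<in>UNIV. w $ j * exp (- B / \<beta>)) \<le> s"
    unfolding s_def by (intro sum_mono mult_left_mono lo w0)
  then have slo: "exp (- B / \<beta>) \<le> s" by (simp add: sum_distrib_right[symmetric] w1)
  have "s \<le> (\<Sum>j\<in>UNIV. w $ j * exp (B / \<beta>))"
    unfolding s_def by (intro sum_mono mult_left_mono hi w0)
  then have shi: "s \<le> exp (B / \<beta>)" by (simp add: sum_distrib_right[symmetric] w1)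
  have spos: "s > 0" using slo by (meson exp_gt_zero less_le_trans)
  have "- B / \<beta> \<le> ln s" using slo spos by (metis exp_gt_zero ln_exp ln_le_cancel_iff)
  then have l1: "- B \<le> \<beta> * ln s" using assms(2) by (simp add: field_simps)
  have "ln s \<le> B / \<beta>" using shi spos by (metis exp_gt_zero ln_exp ln_le_cancel_iff)
  then have l2: "\<beta> * ln s \<le> B" using assms(2) by (simp add: field_simps)
  show ?thesis using l1 l2 unfolding s_def[symmetric] B_def[symmetric] by linarith
qed

lemma jensen_ln:
  fixes w :: "nat \<Rightarrow> real^'m"
  assumes "n \<ge> 1" "\<And>i. i \<in> {1..n} \<Longrightarrow> w i \<in> prob_simplex" "\<And>j. e j > 0"
  shows "(\<Sum>i=1..n. ln (\<Sum>j\<in>UNIV. w i $ j * e j)) / real n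
         \<le> ln (\<Sum>j\<in>UNIV. ((\<Sum>i=1..n. w i $ j) / real n) * e j)"
proof -
  define y where "y i = (\<Sum>j\<in>UNIV. w i $ j * e j)" for i
  have ypos: "i \<in> {1..n} \<Longrightarrow> y i > 0" for i
    unfolding y_def by (rule simplex_pos_sum) (use assms in auto)
  have cv: "convex_on {0<..} (\<lambda>x::real. - ln x)"
    using ln_concave by (simp add: concave_on_def)
  have "- ln (\<Sum>i\<in>{1..n}. (1 / real n) *\<^sub>R y i) \<le> (\<Sum>i\<in>{1..n}. (1 / real n) * - ln (y i))"
    using assms(1) ypos by (intro convex_on_sum[OF _ _ cv]) auto
  moreover have "(\<Sum>i\<in>{1..n}. (1 / real n) *\<^sub>R y i) = (\<Sum>j\<in>UNIV. ((\<Sum>i=1..n. w i $ j) / real n) * e j)"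
    unfolding y_def by (simp add: sum_distrib_left sum_distrib_right sum_divide_distrib sum.swap[of _ UNIV])
  moreover have "(\<Sum>i\<in>{1..n}. (1 / real n) * - ln (y i)) = - ((\<Sum>i=1..n. ln (y i)) / real n)"
    by (simp add: sum_distrib_left[symmetric] sum_negf sum_divide_distrib)
  ultimately show ?thesis unfolding y_def by simp
qed

lemma zeta_Suc: "zeta Q \<omega> (Suc i) $ j = zeta Q \<omega> i $ j + Q (\<omega> (Suc i)) (axis j 1)"
  unfolding zeta_def by simp

lemma zeta_0: "zeta Q \<omega> 0 $ j = 0"
  unfolding zeta_def by simp

definition Dz :: "real \<Rightarrow> ('z \<Rightarrow> real^'m \<Rightarrow> real) \<Rightarrow> (nat \<Rightarrow> 'z) \<Rightarrow> nat \<Rightarrow> real" where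
  "Dz \<beta> Q \<omega> i = (\<Sum>k\<in>UNIV. exp (- (zeta Q \<omega> i $ k) / \<beta>))"

lemma Dz_pos: "Dz \<beta> Q \<omega> i > 0"
  unfolding Dz_def by (intro sum_pos) auto

lemma tele_step:
  assumes "\<beta> > 0"
  shows "- \<beta> * ln (\<Sum>j\<in>UNIV. theta_md \<beta> Q \<omega> i $ j * exp (- Q (\<omega> (Suc i)) (axis j 1) / \<beta>))
        = \<beta> * ln (Dz \<beta> Q \<omega> i) - \<beta> * ln (Dz \<beta> Q \<omega> (Suc i))"
proof -
  have "(\<Sum>j\<in>UNIV. theta_md \<beta> Q \<omega> i $ j * exp (- Q (\<omega> (Suc i)) (axis j 1) / \<beta>))
      = (\<Sum>j\<in>UNIV. exp (- (zeta Q \<omega> (Suc i) $ j) / \<beta>)) / Dz \<beta> Q \<omega> i"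
    unfolding theta_md_def Dz_def zeta_Suc
    by (simp add: sum_divide_distrib exp_add[symmetric] add_divide_distrib diff_divide_distrib)
  also have "\<dots> = Dz \<beta> Q \<omega> (Suc i) / Dz \<beta> Q \<omega> i" unfolding Dz_def ..
  finally show ?thesis using Dz_pos[of \<beta> Q \<omega> i] Dz_pos[of \<beta> Q \<omega> "Suc i"]
    by (simp add: ln_div algebra_simps)
qed

lemma tele_sum:
  assumes "\<beta> > 0"
  shows "(\<Sum>i=1..n. - \<beta> * ln (\<Sum>j\<in>UNIV. theta_md \<beta> Q \<omega> (i - 1) $ j * exp (- Q (\<omega> i) (axis j 1) / \<beta>)))
        = \<beta> * ln (real CARD('m)) - \<beta> * ln (Dz \<beta> (Q :: 'z \<Rightarrow> real^'m \<Rightarrow> real) \<omega> n)"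
proof (induction n)
  case 0
  then show ?case by (simp add: Dz_def zeta_0)
next
  case (Suc n)
  have "(\<Sum>i=1..Suc n. - \<beta> * ln (\<Sum>j\<in>UNIV. theta_md \<beta> Q \<omega> (i - 1) $ j * exp (- Q (\<omega> i) (axis j 1) / \<beta>)))
     = (\<Sum>i=1..n. - \<beta> * ln (\<Sum>j\<in>UNIV. theta_md \<beta> Q \<omega> (i - 1) $ j * exp (- Q (\<omega> i) (axis j 1) / \<beta>)))
       + - \<beta> * ln (\<Sum>j\<in>UNIV. theta_md \<beta> Q \<omega> n $ j * exp (- Q (\<omega> (Suc n)) (axis j 1) / \<beta>))"
    by simp
  then show ?case using Suc tele_step[OF assms, of Q \<omega> n] by simp
qed

lemma Dz_bound:
  assumes "\<beta> > 0"
  shows "- \<beta> * ln (Dz \<beta> Q \<omega> n) \<le> zeta Q \<omega> n $ j"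
proof -
  have "exp (- (zeta Q \<omega> n $ j) / \<beta>) \<le> Dz \<beta> Q \<omega> n"
    unfolding Dz_def by (rule member_le_sum) auto
  then have "- (zeta Q \<omega> n $ j) / \<beta> \<le> ln (Dz \<beta> Q \<omega> n)"
    using Dz_pos by (metis exp_gt_zero ln_exp ln_le_cancel_iff)
  then show ?thesis using assms by (simp add: field_simps)
qed



lemma pw_eq:
  fixes a b :: ennreal
  shows "e2ennreal (enn2ereal a - enn2ereal b) + b = e2ennreal (- (enn2ereal a - enn2ereal b)) + a"
proof (cases a rule: ennreal_cases)
  case (real r)
  then show ?thesis
  proof (cases b rule: ennreal_cases)
    case (real s)
    show ?thesis
    proof (cases "r \<le> s")
      case True
      then show ?thesis using \<open>a = ennreal r\<close> \<open>b = ennreal s\<close> \<open>0 \<le> r\<close> \<open>0 \<le> s\<close>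
        by (simp add: ennreal_neg ennreal_plus[symmetric] del: ennreal_plus)
    next
      case False
      then show ?thesis using \<open>a = ennreal r\<close> \<open>b = ennreal s\<close> \<open>0 \<le> r\<close> \<open>0 \<le> s\<close>
        by (simp add: ennreal_neg ennreal_plus[symmetric] del: ennreal_plus)
    qed
  next
    case top
    then show ?thesis using real by simp
  qed
next
  case top
  then show ?thesis by (cases b rule: ennreal_cases) auto
qed

lemma pw_le1:
  fixes a b :: ennreal
  shows "e2ennreal (enn2ereal a - enn2ereal b) \<le> a"
proof (cases a rule: ennreal_cases)
  case (real r)
  then show ?thesis
    by (cases b rule: ennreal_cases) (auto intro!: ennreal_leI simp: e2ennreal_neg)
qed simp

lemma pw_le2:
  fixes a b :: ennreal
  shows "e2ennreal (- (enn2ereal a - enn2ereal b)) \<le> b"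
proof (cases b rule: ennreal_cases)
  case (real r)
  then show ?thesis
    by (cases a rule: ennreal_cases) (auto intro!: ennreal_leI simp: e2ennreal_neg)
qed simp

lemma arith_final:
  fixes p q A B :: ennreal
  assumes "p + B = q + A" "p \<le> A" "q \<le> B"
  shows "enn2ereal p - enn2ereal q \<le> enn2ereal A - enn2ereal B"
proof (cases "A = top")
  case True
  then show ?thesis by simp
next
  case False
  then have pf: "p \<noteq> top" using assms(2) top_unique by blast
  show ?thesis
  proof (cases "B = top")
    case True
    then have "q + A = top" using assms(1) by simp
    then have "q = top" using False by simp
    then show ?thesis using True pf by (cases p rule: ennreal_cases) auto
  next
    case Bf: False
    then have qf: "q \<noteq> top" using assms(3) top_unique by blast
    obtain p' q' A' B' where r: "p = ennreal p'" "q = ennreal q'" "A = ennreal A'" "B = ennreal B'"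
      "0 \<le> p'" "0 \<le> q'" "0 \<le> A'" "0 \<le> B'"
      using pf qf False Bf by (metis ennreal_cases)
    then have "p' + B' = q' + A'" using assms(1) by (simp add: ennreal_plus[symmetric] del: ennreal_plus)
    then show ?thesis using r by simp
  qed
qed

lemma eexp_split_le:
  fixes a b :: "'a \<Rightarrow> ennreal"
  assumes [measurable]: "a \<in> borel_measurable N" "b \<in> borel_measurable N"
  shows "eexp N (\<lambda>x. enn2ereal (a x) - enn2ereal (b x))
    \<le> enn2ereal (integral\<^sup>N N a) - enn2ereal (integral\<^sup>N N b)"
proof -
  define p where "p = (\<integral>\<^sup>+x. e2ennreal (enn2ereal (a x) - enn2ereal (b x)) \<partial>N)"
  define q where "q = (\<integral>\<^sup>+x. e2ennreal (- (enn2ereal (a x) - enn2ereal (b x))) \<partial>N)"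
  have "p + integral\<^sup>N N b = (\<integral>\<^sup>+x. e2ennreal (enn2ereal (a x) - enn2ereal (b x)) + b x \<partial>N)"
    unfolding p_def by (rule nn_integral_add[symmetric]) measurable
  also have "\<dots> = (\<integral>\<^sup>+x. e2ennreal (- (enn2ereal (a x) - enn2ereal (b x))) + a x \<partial>N)"
    by (simp only: pw_eq)
  also have "\<dots> = q + integral\<^sup>N N a"
    unfolding q_def by (rule nn_integral_add) measurable
  finally have e: "p + integral\<^sup>N N b = q + integral\<^sup>N N a" .
  have "p \<le> integral\<^sup>N N a" unfolding p_def by (intro nn_integral_mono pw_le1)
  moreover have "q \<le> integral\<^sup>N N b" unfolding q_def by (intro nn_integral_mono pw_le2)
  ultimately show ?thesis using arith_final[OF e] unfolding eexp_def p_def q_def by simp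
qed



lemma enn2ereal_fin: "x \<noteq> top \<Longrightarrow> enn2ereal x = ereal (enn2real x)"
  by (cases x rule: ennreal_cases) auto

lemma eexp_real: "eexp N (\<lambda>x. ereal (f x)) =
   enn2ereal (\<integral>\<^sup>+x. ennreal (f x) \<partial>N) - enn2ereal (\<integral>\<^sup>+x. ennreal (- f x) \<partial>N)"
  unfolding eexp_def by simp

lemma nn_abs_split:
  fixes f :: "'a \<Rightarrow> real"
  assumes [measurable]: "f \<in> borel_measurable N"
  shows "(\<integral>\<^sup>+x. ennreal (norm (f x)) \<partial>N) = (\<integral>\<^sup>+x. ennreal (f x) \<partial>N) + (\<integral>\<^sup>+x. ennreal (- f x) \<partial>N)"
proof -
  have "ennreal (norm (f x)) = ennreal (f x) + ennreal (- f x)" for x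
    by (cases "f x \<ge> 0") (auto simp: ennreal_neg)
  then have "(\<integral>\<^sup>+x. ennreal (norm (f x)) \<partial>N) = (\<integral>\<^sup>+x. ennreal (f x) + ennreal (- f x) \<partial>N)"
    by simp
  also have "\<dots> = (\<integral>\<^sup>+x. ennreal (f x) \<partial>N) + (\<integral>\<^sup>+x. ennreal (- f x) \<partial>N)"
    by (rule nn_integral_add) measurable
  finally show ?thesis .
qed

lemma eexp_integrable:
  fixes f :: "'a \<Rightarrow> real"
  assumes "integrable N f"
  shows "eexp N (\<lambda>x. ereal (f x)) = ereal (integral\<^sup>L N f)"
proof -
  have [measurable]: "f \<in> borel_measurable N" using assms by auto
  have fin: "(\<integral>\<^sup>+x. ennreal (norm (f x)) \<partial>N) < top" using assms by (simp add: integrable_iff_bounded)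
  have s: "(\<integral>\<^sup>+x. ennreal (norm (f x)) \<partial>N) = (\<integral>\<^sup>+x. ennreal (f x) \<partial>N) + (\<integral>\<^sup>+x. ennreal (- f x) \<partial>N)"
    by (rule nn_abs_split) measurable
  have "(\<integral>\<^sup>+x. ennreal (f x) \<partial>N) + (\<integral>\<^sup>+x. ennreal (- f x) \<partial>N) \<noteq> top"
    using fin unfolding s by (simp add: less_top)
  then have f1: "(\<integral>\<^sup>+x. ennreal (f x) \<partial>N) \<noteq> top" and f2: "(\<integral>\<^sup>+x. ennreal (- f x) \<partial>N) \<noteq> top"
    by auto
  show ?thesis unfolding eexp_real real_lebesgue_integral_def[OF assms]
    using f1 f2 by (simp add: enn2ereal_fin)
qed

lemma integrable_of_eexp:
  fixes f :: "'a \<Rightarrow> real"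
  assumes [measurable]: "f \<in> borel_measurable N" and "\<bar>eexp N (\<lambda>x. ereal (f x))\<bar> \<noteq> \<infinity>"
  shows "integrable N f"
proof -
  define A where "A = (\<integral>\<^sup>+x. ennreal (f x) \<partial>N)"
  define B where "B = (\<integral>\<^sup>+x. ennreal (- f x) \<partial>N)"
  have e: "\<bar>enn2ereal A - enn2ereal B\<bar> \<noteq> \<infinity>" using assms(2) unfolding eexp_real A_def B_def .
  have "A \<noteq> top" using e by auto
  moreover have "B \<noteq> top" using e \<open>A \<noteq> top\<close> by (cases A rule: ennreal_cases) auto
  ultimately show ?thesis
    unfolding integrable_iff_bounded nn_abs_split[OF assms(1)] A_def[symmetric] B_def[symmetric]
    by (simp add: less_top)
qed


lemma pw_pos_bound:
  fixes g h c :: real assumes "c > 0"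
  shows "ennreal (g + c * h) \<le> ennreal \<bar>g\<bar> + ennreal c * ennreal h"
proof (cases "h \<ge> 0")
  case True
  have e1: "ennreal c * ennreal h = ennreal (c * h)" by (rule ennreal_mult[symmetric]) (use True assms in auto)
  have e2: "ennreal \<bar>g\<bar> + ennreal (c * h) = ennreal (\<bar>g\<bar> + c * h)"
    by (rule ennreal_plus[symmetric]) (use True assms in auto)
  have "ennreal (g + c * h) \<le> ennreal (\<bar>g\<bar> + c * h)" by (rule ennreal_leI) simp
  then show ?thesis unfolding e1 e2 .
next
  case False
  have "c * h \<le> 0" using False assms by (simp add: mult_pos_neg less_imp_le)
  then have "g + c * h \<le> \<bar>g\<bar>" by linarith
  then have "ennreal (g + c * h) \<le> ennreal \<bar>g\<bar>" by (rule ennreal_leI)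
  moreover have "ennreal \<bar>g\<bar> \<le> ennreal \<bar>g\<bar> + ennreal c * ennreal h" by simp
  ultimately show ?thesis by (rule order_trans)
qed

lemma pw_neg_bound:
  fixes g h c :: real assumes "c > 0"
  shows "ennreal c * ennreal (- h) \<le> ennreal (- (g + c * h)) + ennreal \<bar>g\<bar>"
proof (cases "h \<le> 0")
  case True
  have e1: "ennreal c * ennreal (- h) = ennreal (c * - h)" by (rule ennreal_mult[symmetric]) (use True assms in auto)
  have i: "c * - h \<le> max (- (g + c * h)) 0 + \<bar>g\<bar>" by linarith
  have e2: "ennreal (max (- (g + c * h)) 0 + \<bar>g\<bar>) = ennreal (max (- (g + c * h)) 0) + ennreal \<bar>g\<bar>"
    by (rule ennreal_plus) auto
  have e3: "ennreal (max (- (g + c * h)) 0) = ennreal (- (g + c * h))"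
    by (simp add: max_def ennreal_neg)
  have "ennreal (c * - h) \<le> ennreal (max (- (g + c * h)) 0 + \<bar>g\<bar>)" by (rule ennreal_leI) (rule i)
  then show ?thesis unfolding e1 e2 e3 .
next
  case False
  then show ?thesis by (simp add: ennreal_neg)
qed

lemma eexp_lin_le:
  fixes g h :: "'a \<Rightarrow> real"
  assumes "integrable N g" and [measurable]: "h \<in> borel_measurable N" and c: "c > 0"
  shows "eexp N (\<lambda>x. ereal (g x + c * h x)) \<le> ereal (integral\<^sup>L N g) + ereal c * eexp N (\<lambda>x. ereal (h x))"
proof -
  have [measurable]: "g \<in> borel_measurable N" using assms by auto
  define hp where "hp = (\<integral>\<^sup>+x. ennreal (h x) \<partial>N)"
  define hm where "hm = (\<integral>\<^sup>+x. ennreal (- h x) \<partial>N)"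
  define G where "G = (\<integral>\<^sup>+x. ennreal (norm (g x)) \<partial>N)"
  have Gf: "G \<noteq> top" using assms(1) unfolding G_def by (simp add: integrable_iff_bounded less_top)
  have eh: "eexp N (\<lambda>x. ereal (h x)) = enn2ereal hp - enn2ereal hm"
    unfolding eexp_real hp_def hm_def ..
  show ?thesis
  proof (cases "hp = top")
    case True
    then have "eexp N (\<lambda>x. ereal (h x)) = \<infinity>" unfolding eh by simp
    then show ?thesis using c by simp
  next
    case hpf: False
    show ?thesis
    proof (cases "hm = top")
      case False
      have "(\<integral>\<^sup>+x. ennreal (norm (h x)) \<partial>N) = hp + hm" unfolding hp_def hm_def
        by (rule nn_abs_split) measurable
      then have ih: "integrable N h" using hpf False
        by (simp add: integrable_iff_bounded less_top[symmetric])
      have ig: "integrable N (\<lambda>x. g x + c * h x)" using ih assms(1) by auto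
      show ?thesis
        unfolding eexp_integrable[OF ig] eexp_integrable[OF ih]
        using ih assms(1) by simp
    next
      case True
      then have "eexp N (\<lambda>x. ereal (h x)) = - \<infinity>" unfolding eh using hpf
        by (cases hp rule: ennreal_cases) auto
      then have rhs: "ereal (integral\<^sup>L N g) + ereal c * eexp N (\<lambda>x. ereal (h x)) = - \<infinity>"
        using c by simp
      define Fp where "Fp = (\<integral>\<^sup>+x. ennreal (g x + c * h x) \<partial>N)"
      define Fm where "Fm = (\<integral>\<^sup>+x. ennreal (- (g x + c * h x)) \<partial>N)"
      have "Fp \<le> (\<integral>\<^sup>+x. ennreal (norm (g x)) + ennreal c * ennreal (h x) \<partial>N)"
        unfolding Fp_def by (intro nn_integral_mono) (simp add: pw_pos_bound[OF c])
      also have "\<dots> = G + ennreal c * hp"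
        unfolding G_def hp_def by (simp add: nn_integral_add nn_integral_cmult)
      finally have "Fp \<le> G + ennreal c * hp" .
      moreover have "ennreal c * hp \<noteq> top" using hpf by (simp add: ennreal_mult_eq_top_iff)
      then have "G + ennreal c * hp \<noteq> top" using Gf by (simp add: ennreal_add_eq_top)
      ultimately have Fpf: "Fp \<noteq> top" by (auto simp: top_unique)
      have "ennreal c * hm = (\<integral>\<^sup>+x. ennreal c * ennreal (- h x) \<partial>N)"
        unfolding hm_def by (simp add: nn_integral_cmult)
      also have "\<dots> \<le> (\<integral>\<^sup>+x. ennreal (- (g x + c * h x)) + ennreal (norm (g x)) \<partial>N)"
        by (intro nn_integral_mono) (metis pw_neg_bound[OF c] real_norm_def)
      also have "\<dots> = Fm + G"
        unfolding G_def Fm_def by (simp add: nn_integral_add)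
      finally have "ennreal c * hm \<le> Fm + G" .
      moreover have "ennreal c * hm = top" using True c by (simp add: ennreal_mult_eq_top_iff)
      ultimately have "Fm + G = top" by (simp add: top_unique)
      then have "Fm = top" using Gf by (simp add: ennreal_add_eq_top)
      then have "eexp N (\<lambda>x. ereal (g x + c * h x)) = - \<infinity>"
        unfolding eexp_real Fm_def[symmetric] Fp_def[symmetric] using Fpf
        by (cases Fp rule: ennreal_cases) auto
      then show ?thesis by simp
    qed
  qed
qed




lemma zeta_local:
  assumes "\<And>k. k \<in> {1..m} \<Longrightarrow> \<omega> k = \<omega>' k"
  shows "zeta Q \<omega> m = zeta Q \<omega>' m"
  unfolding zeta_def using assms by (intro arg_cong[where f=vec_lambda] ext sum.cong) auto

lemma theta_local:
  assumes "\<And>k. k \<in> {1..m} \<Longrightarrow> \<omega> k = \<omega>' k"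
  shows "theta_md \<beta> Q \<omega> m = theta_md \<beta> Q \<omega>' m"
proof -
  have "zeta Q \<omega> m = zeta Q \<omega>' m" by (rule zeta_local) (rule assms)
  then show ?thesis unfolding theta_md_def by simp
qed

lemma mavg_local:
  assumes "\<And>k. k \<in> {1..<n} \<Longrightarrow> \<omega> k = \<omega>' k"
  shows "mirror_avg \<beta> Q n \<omega> = mirror_avg \<beta> Q n \<omega>'"
  unfolding mirror_avg_def
proof (intro arg_cong[where f="\<lambda>v. (1 / real n) *\<^sub>R v"] sum.cong refl theta_local)
  fix i k assume "i \<in> {1..n}" "k \<in> {1..i - 1}"
  then show "\<omega> k = \<omega>' k" using assms by auto
qed

lemma comp_integrable:
  fixes f :: "'z \<Rightarrow> real"
  assumes "prob_space P" "integrable P f" "k \<in> I"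
  shows "integrable (PiM I (\<lambda>_. P)) (\<lambda>\<omega>. f (\<omega> k))"
    and "integral\<^sup>L (PiM I (\<lambda>_. P)) (\<lambda>\<omega>. f (\<omega> k)) = integral\<^sup>L P f"
proof -
  have d: "distr (PiM I (\<lambda>_. P)) P (\<lambda>\<omega>. \<omega> k) = P"
    using distr_PiM_component[of I "\<lambda>_. P" k] assms by simp
  have fm[measurable]: "f \<in> borel_measurable P" using assms by auto
  have m: "(\<lambda>\<omega>. \<omega> k) \<in> measurable (PiM I (\<lambda>_. P)) P" using assms by simp
  show "integrable (PiM I (\<lambda>_. P)) (\<lambda>\<omega>. f (\<omega> k))"
    using integrable_distr_eq[OF m fm] d assms by simp
  show "integral\<^sup>L (PiM I (\<lambda>_. P)) (\<lambda>\<omega>. f (\<omega> k)) = integral\<^sup>L P f"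
    using integral_distr[OF m fm] d by simp
qed


lemma swap_integral:
  fixes g :: "(nat \<Rightarrow> 'z) \<Rightarrow> real"
  assumes "prob_space P" "i \<in> {1..n}" and gm: "g \<in> borel_measurable (PiM {1..n} (\<lambda>_. P))"
  shows "integral\<^sup>L (PiM {1..n} (\<lambda>_. P)) g
       = integral\<^sup>L (PiM {1..n} (\<lambda>_. P)) (\<lambda>\<omega>. g (\<lambda>k\<in>{1..n}. \<omega> (if k = i then n else if k = n then i else k)))"
proof -
  define \<sigma> where "\<sigma> k = (if k = i then n else if k = n then i else k)" for k
  have inj: "inj_on \<sigma> {1..n}" unfolding \<sigma>_def inj_on_def by auto
  have sfun: "\<sigma> \<in> {1..n} \<rightarrow> {1..n}" unfolding \<sigma>_def using assms(2) by auto
  have d: "distr (PiM {1..n} (\<lambda>_. P)) (PiM {1..n} (\<lambda>_. P)) (\<lambda>\<omega>. \<lambda>k\<in>{1..n}. \<omega> (\<sigma> k)) = PiM {1..n} (\<lambda>_. P)"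
    using distr_PiM_reindex[of "{1..n}" "\<lambda>_. P" \<sigma> "{1..n}", OF _ inj sfun] assms(1) by simp
  have tm: "(\<lambda>\<omega>. \<lambda>k\<in>{1..n}. \<omega> (\<sigma> k)) \<in> measurable (PiM {1..n} (\<lambda>_. P)) (PiM {1..n} (\<lambda>_. P))"
  proof (rule measurable_restrict)
    fix k assume "k \<in> {1..n}"
    then have "\<sigma> k \<in> {1..n}" using sfun by auto
    then show "(\<lambda>\<omega>. \<omega> (\<sigma> k)) \<in> measurable (PiM {1..n} (\<lambda>_. P)) P" by measurable
  qed
  have "integral\<^sup>L (PiM {1..n} (\<lambda>_. P)) g
      = integral\<^sup>L (distr (PiM {1..n} (\<lambda>_. P)) (PiM {1..n} (\<lambda>_. P)) (\<lambda>\<omega>. \<lambda>k\<in>{1..n}. \<omega> (\<sigma> k))) g"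
    unfolding d ..
  also have "\<dots> = integral\<^sup>L (PiM {1..n} (\<lambda>_. P)) (\<lambda>\<omega>. g (\<lambda>k\<in>{1..n}. \<omega> (\<sigma> k)))"
    by (rule integral_distr[OF tm gm])
  finally show ?thesis unfolding \<sigma>_def .
qed

theorem lemma4p1:
  fixes P :: "'z measure" and Q :: "'z \<Rightarrow> real^'m \<Rightarrow> real"
    and \<beta> :: real and n :: nat
  assumes "prob_space P"
    and "(\<lambda>(z, \<theta>). Q z \<theta>) \<in> borel_measurable (P \<Otimes>\<^sub>M restrict_space borel (prob_simplex :: (real^'m) set))"
    and "\<forall>\<theta>\<in>prob_simplex. eexp_exists P (\<lambda>z. ereal (Q z \<theta>))"
    and "\<forall>j. \<bar>risk P Q (axis j 1)\<bar> \<noteq> \<infinity>"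
    and "\<beta> > 0"
    and "CARD('m) \<ge> 2"
    and "n \<ge> 1"
  shows "eexp (PiM {1..<n} (\<lambda>_. P)) (\<lambda>\<omega>. risk P Q (mirror_avg \<beta> Q n \<omega>))
     \<le> (MIN j\<in>UNIV. risk P Q (axis j 1))
        + ereal (\<beta> * ln (real CARD('m)) / real n)
        + ereal \<beta> * eexp (PiM {1..n} (\<lambda>_. P))
            (\<lambda>\<omega>. ereal (ln (\<Sum>j\<in>UNIV. mirror_avg \<beta> Q n \<omega> $ j *
               exp (- (Q (\<omega> n) (axis j 1) - Q (\<omega> n) (mirror_avg \<beta> Q n \<omega>)) / \<beta>))))"
proof -
  interpret P: prob_space P by (rule assms(1))
  have bpos: "\<beta> > 0" by (rule assms(5))
  define RS where "RS = restrict_space borel (prob_simplex :: (real^'m) set)"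
  have Qm: "(\<lambda>(z, \<theta>). Q z \<theta>) \<in> borel_measurable (P \<Otimes>\<^sub>M RS)" using assms(2) unfolding RS_def .
  define q where "q j z = Q z (axis j 1)" for j z
  have qm[measurable]: "q j \<in> borel_measurable P" for j
    unfolding q_def using q_meas[OF assms(2) axis_simplex] .
  have qm'[measurable]: "(\<lambda>z. Q z (axis j 1)) \<in> borel_measurable P" for j
    using q_meas[OF assms(2) axis_simplex] .
  have qint: "integrable P (q j)" for j
  proof (rule integrable_of_eexp[OF qm])
    show "\<bar>eexp P (\<lambda>x. ereal (q j x))\<bar> \<noteq> \<infinity>" using assms(4) unfolding risk_def q_def by auto
  qed
  define a where "a j = integral\<^sup>L P (q j)" for j
  have risk_e: "risk P Q (axis j 1) = ereal (a j)" for j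
    unfolding risk_def a_def using eexp_integrable[OF qint[of j]] by (simp add: q_def)
  have "(MIN j\<in>UNIV. risk P Q (axis j 1)) \<in> range (\<lambda>j. risk P Q (axis j 1))"
    by (rule Min_in) auto
  then obtain j0 where j0: "(MIN j\<in>UNIV. risk P Q (axis j 1)) = risk P Q (axis j0 1)"
    by blast

  define Pn where "Pn = PiM {1..n} (\<lambda>_. P)"
  define Xn where "Xn = PiM {1..<n} (\<lambda>_. P)"
  interpret Pn: prob_space Pn unfolding Pn_def by (intro prob_space_PiM assms(1))
  define th where "th \<omega> = mirror_avg \<beta> Q n \<omega>" for \<omega>
  have th_S: "th \<omega> \<in> prob_simplex" for \<omega> unfolding th_def by (rule mavg_simplex[OF assms(7)])
  have thX: "th \<in> borel_measurable Xn" unfolding th_def Xn_def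
    by (rule mavg_meas) (use qm' in auto)
  have thP[measurable]: "th \<in> borel_measurable Pn" unfolding th_def Pn_def
    by (rule mavg_meas) (use qm' in auto)
  have thXR: "th \<in> measurable Xn RS" unfolding RS_def
    by (rule measurable_restrict_space2) (use thX th_S in auto)
  have thPR: "th \<in> measurable Pn RS" unfolding RS_def
    by (rule measurable_restrict_space2) (use thP th_S in auto)
  define F where "F \<omega> = Q (\<omega> n) (th \<omega>)" for \<omega>
  have Fm[measurable]: "F \<in> borel_measurable Pn"
  proof -
    have "(\<lambda>\<omega>. (\<omega> n, th \<omega>)) \<in> measurable Pn (P \<Otimes>\<^sub>M RS)"
      using thPR assms(7) unfolding Pn_def by (intro measurable_Pair) auto
    from measurable_comp[OF this Qm] show ?thesis unfolding F_def by (simp add: o_def)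
  qed

  have stepA: "eexp Xn (\<lambda>\<omega>. risk P Q (th \<omega>)) \<le> eexp Pn (\<lambda>\<omega>. ereal (F \<omega>))"
  proof -
    define Ap where "Ap \<theta> = (\<integral>\<^sup>+z. e2ennreal (ereal (Q z \<theta>)) \<partial>P)" for \<theta>
    define Am where "Am \<theta> = (\<integral>\<^sup>+z. e2ennreal (- ereal (Q z \<theta>)) \<partial>P)" for \<theta>
    have risk_eq: "risk P Q \<theta> = enn2ereal (Ap \<theta>) - enn2ereal (Am \<theta>)" for \<theta>
      unfolding risk_def eexp_def Ap_def Am_def ..
    have QmS0: "(\<lambda>(x, y). (\<lambda>(z, \<theta>). Q z \<theta>) (y, x)) \<in> borel_measurable (RS \<Otimes>\<^sub>M P)"
      by (rule measurable_pair_swap[OF Qm])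
    have QmS[measurable]: "(\<lambda>p. Q (snd p) (fst p)) \<in> borel_measurable (RS \<Otimes>\<^sub>M P)"
      using QmS0 by (simp add: case_prod_beta')
    have f1: "(\<lambda>p. e2ennreal (ereal (Q (snd p) (fst p)))) \<in> borel_measurable (RS \<Otimes>\<^sub>M P)"
      by measurable
    have f2: "(\<lambda>p. e2ennreal (- ereal (Q (snd p) (fst p)))) \<in> borel_measurable (RS \<Otimes>\<^sub>M P)"
      by measurable
    have Apm: "Ap \<in> borel_measurable RS"
      using P.borel_measurable_nn_integral_fst[OF f1] unfolding Ap_def by simp
    have Amm: "Am \<in> borel_measurable RS"
      using P.borel_measurable_nn_integral_fst[OF f2] unfolding Am_def by simp
    have ApX: "(\<lambda>x. Ap (th x)) \<in> borel_measurable Xn" using measurable_comp[OF thXR Apm] by (simp add: o_def)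
    have AmX: "(\<lambda>x. Am (th x)) \<in> borel_measurable Xn" using measurable_comp[OF thXR Amm] by (simp add: o_def)
    have A1: "eexp Xn (\<lambda>\<omega>. risk P Q (th \<omega>))
        \<le> enn2ereal (\<integral>\<^sup>+x. Ap (th x) \<partial>Xn) - enn2ereal (\<integral>\<^sup>+x. Am (th x) \<partial>Xn)"
      unfolding risk_eq by (rule eexp_split_le[OF ApX AmX])
    interpret PS: product_sigma_finite "\<lambda>_::nat. P"
      by (simp add: product_sigma_finite_def prob_space_imp_sigma_finite assms(1))
    have ins: "{1..n} = insert n {1..<n}" using assms(7) by auto
    have thupd: "th (x(n := y)) = th x" for x y unfolding th_def by (rule mavg_local) auto
    have m1: "(\<lambda>\<omega>. e2ennreal (ereal (F \<omega>))) \<in> borel_measurable Pn" by measurable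
    have m2: "(\<lambda>\<omega>. e2ennreal (- ereal (F \<omega>))) \<in> borel_measurable Pn" by measurable
    have A2: "(\<integral>\<^sup>+\<omega>. e2ennreal (ereal (F \<omega>)) \<partial>Pn) = (\<integral>\<^sup>+x. Ap (th x) \<partial>Xn)"
    proof -
      have "(\<integral>\<^sup>+\<omega>. e2ennreal (ereal (F \<omega>)) \<partial>Pn)
          = (\<integral>\<^sup>+x. \<integral>\<^sup>+y. e2ennreal (ereal (F (x(n := y)))) \<partial>P \<partial>Xn)"
        using m1 unfolding Pn_def Xn_def ins by (intro PS.product_nn_integral_insert) auto
      also have "\<dots> = (\<integral>\<^sup>+x. Ap (th x) \<partial>Xn)"
        by (simp add: F_def thupd Ap_def)
      finally show ?thesis .
    qed
    have A3: "(\<integral>\<^sup>+\<omega>. e2ennreal (- ereal (F \<omega>)) \<partial>Pn) = (\<integral>\<^sup>+x. Am (th x) \<partial>Xn)"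
    proof -
      have "(\<integral>\<^sup>+\<omega>. e2ennreal (- ereal (F \<omega>)) \<partial>Pn)
          = (\<integral>\<^sup>+x. \<integral>\<^sup>+y. e2ennreal (- ereal (F (x(n := y)))) \<partial>P \<partial>Xn)"
        using m2 unfolding Pn_def Xn_def ins by (intro PS.product_nn_integral_insert) auto
      also have "\<dots> = (\<integral>\<^sup>+x. Am (th x) \<partial>Xn)"
        by (simp add: F_def thupd Am_def)
      finally show ?thesis .
    qed
    show ?thesis using A1 unfolding eexp_def A2 A3 .
  qed

  define L where "L \<omega> = - \<beta> * ln (\<Sum>j\<in>UNIV. th \<omega> $ j * exp (- q j (\<omega> n) / \<beta>))" for \<omega>
  define S where "S \<omega> = ln (\<Sum>j\<in>UNIV. th \<omega> $ j *
               exp (- (Q (\<omega> n) (axis j 1) - Q (\<omega> n) (th \<omega>)) / \<beta>))" for \<omega>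
  have qk: "(\<lambda>\<omega>. Q (\<omega> k) (axis j 1)) \<in> borel_measurable Pn" if "k \<in> {1..n}" for j k
    unfolding Pn_def using that by measurable
  have qn[measurable]: "(\<lambda>\<omega>. Q (\<omega> n) (axis j 1)) \<in> borel_measurable Pn" for j
    using qk assms(7) by auto
  have qn'[measurable]: "(\<lambda>\<omega>. q j (\<omega> n)) \<in> borel_measurable Pn" for j
    unfolding q_def by (rule qn)
  have Fm'[measurable]: "(\<lambda>\<omega>. Q (\<omega> n) (th \<omega>)) \<in> borel_measurable Pn"
    using Fm unfolding F_def .
  have FLS: "F \<omega> = L \<omega> + \<beta> * S \<omega>" for \<omega>
  proof -
    define s0 where "s0 = (\<Sum>j\<in>UNIV. th \<omega> $ j * exp (- q j (\<omega> n) / \<beta>))"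
    have s0pos: "s0 > 0" unfolding s0_def by (rule simplex_pos_sum[OF th_S]) simp
    have e: "(\<Sum>j\<in>UNIV. th \<omega> $ j * exp (- (Q (\<omega> n) (axis j 1) - Q (\<omega> n) (th \<omega>)) / \<beta>))
       = exp (F \<omega> / \<beta>) * s0"
      unfolding s0_def sum_distrib_left F_def q_def
    proof (intro sum.cong refl)
      fix j
      have "exp (- (Q (\<omega> n) (axis j 1) - Q (\<omega> n) (th \<omega>)) / \<beta>)
          = exp (Q (\<omega> n) (th \<omega>) / \<beta>) * exp (- Q (\<omega> n) (axis j 1) / \<beta>)"
        by (simp add: exp_add[symmetric] diff_divide_distrib add_divide_distrib)
      then show "th \<omega> $ j * exp (- (Q (\<omega> n) (axis j 1) - Q (\<omega> n) (th \<omega>)) / \<beta>) =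
          exp (Q (\<omega> n) (th \<omega>) / \<beta>) * (th \<omega> $ j * exp (- Q (\<omega> n) (axis j 1) / \<beta>))"
        by simp
    qed
    have "S \<omega> = F \<omega> / \<beta> + ln s0" unfolding S_def e using s0pos by (simp add: ln_mult)
    moreover have "L \<omega> = - \<beta> * ln s0" unfolding L_def s0_def ..
    ultimately show ?thesis using bpos by (simp add: field_simps)
  qed
  have thj[measurable]: "(\<lambda>x. th x $ j) \<in> borel_measurable Pn" for j
    using measurable_comp[OF thP borel_measurable_nth[of j]] by (simp add: o_def)
  have qe[measurable]: "(\<lambda>x. exp (- q j (x n) / \<beta>)) \<in> borel_measurable Pn" for j
    using qn' by measurable
  have Lm: "L \<in> borel_measurable Pn" unfolding L_def by measurable
  have Sm: "S \<in> borel_measurable Pn" unfolding S_def by measurable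
  have qint_n: "integrable Pn (\<lambda>\<omega>. q j (\<omega> k))" if "k \<in> {1..n}" for j k
    unfolding Pn_def by (rule comp_integrable(1)[OF assms(1) qint that])
  have Lint: "integrable Pn L"
  proof (rule Bochner_Integration.integrable_bound[OF _ Lm])
    show "integrable Pn (\<lambda>\<omega>. \<Sum>j\<in>UNIV. \<bar>q j (\<omega> n)\<bar>)"
      by (rule Bochner_Integration.integrable_sum, rule Bochner_Integration.integrable_abs, rule qint_n)
        (use assms(7) in auto)
    show "AE x in Pn. norm (L x) \<le> norm (\<Sum>j\<in>UNIV. \<bar>q j (x n)\<bar>)"
    proof (intro AE_I2)
      fix x
      have "\<bar>\<beta> * ln (\<Sum>j\<in>UNIV. th x $ j * exp (- q j (x n) / \<beta>))\<bar> \<le> (\<Sum>j\<in>UNIV. \<bar>q j (x n)\<bar>)"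
        by (rule softmin_bound[OF th_S bpos])
      then show "norm (L x) \<le> norm (\<Sum>j\<in>UNIV. \<bar>q j (x n)\<bar>)" unfolding L_def by simp
    qed
  qed
  have stepB: "eexp Pn (\<lambda>\<omega>. ereal (F \<omega>)) \<le> ereal (integral\<^sup>L Pn L) + ereal \<beta> * eexp Pn (\<lambda>\<omega>. ereal (S \<omega>))"
    unfolding FLS by (rule eexp_lin_le[OF Lint Sm bpos])

  have stepC: "integral\<^sup>L Pn L \<le> a j0 + \<beta> * ln (real CARD('m)) / real n"
  proof -
    define G where "G i \<omega> = - \<beta> * ln (\<Sum>j\<in>UNIV. theta_md \<beta> Q \<omega> (i - 1) $ j * exp (- q j (\<omega> n) / \<beta>))" for i \<omega>
    define H where "H i \<omega> = - \<beta> * ln (\<Sum>j\<in>UNIV. theta_md \<beta> Q \<omega> (i - 1) $ j * exp (- q j (\<omega> i) / \<beta>))" for i \<omega>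
    have thetaj: "(\<lambda>\<omega>. theta_md \<beta> Q \<omega> (i - 1) $ j) \<in> borel_measurable Pn" if "i \<in> {1..n}" for i j
    proof -
      have "(\<lambda>\<omega>. theta_md \<beta> Q \<omega> (i - 1)) \<in> borel_measurable Pn"
        unfolding Pn_def by (rule theta_meas) (use qm' that in auto)
      from measurable_comp[OF this borel_measurable_nth[of j]] show ?thesis by (simp add: o_def)
    qed
    have Gm: "G i \<in> borel_measurable Pn" if "i \<in> {1..n}" for i
    proof -
      have [measurable]: "(\<lambda>\<omega>. theta_md \<beta> Q \<omega> (i - 1) $ j) \<in> borel_measurable Pn" for j
        using thetaj[OF that] .
      show ?thesis unfolding G_def by measurable
    qed
    have Hm: "H i \<in> borel_measurable Pn" if "i \<in> {1..n}" for i
    proof -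
      have [measurable]: "(\<lambda>\<omega>. theta_md \<beta> Q \<omega> (i - 1) $ j) \<in> borel_measurable Pn" for j
        using thetaj[OF that] .
      have [measurable]: "(\<lambda>\<omega>. q j (\<omega> i)) \<in> borel_measurable Pn" for j
        unfolding q_def using qk[OF that] .
      show ?thesis unfolding H_def by measurable
    qed
    have absint: "integrable Pn (\<lambda>\<omega>. \<Sum>j\<in>UNIV. \<bar>q j (\<omega> k)\<bar>)" if "k \<in> {1..n}" for k
      by (rule Bochner_Integration.integrable_sum, rule Bochner_Integration.integrable_abs, rule qint_n)
        (use that in auto)
    have Gint: "integrable Pn (G i)" if "i \<in> {1..n}" for i
    proof (rule Bochner_Integration.integrable_bound[OF absint[of n] Gm[OF that]])
      show "n \<in> {1..n}" using assms(7) by auto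
      show "AE x in Pn. norm (G i x) \<le> norm (\<Sum>j\<in>UNIV. \<bar>q j (x n)\<bar>)"
      proof (intro AE_I2)
        fix x
        have "\<bar>\<beta> * ln (\<Sum>j\<in>UNIV. theta_md \<beta> Q x (i - 1) $ j * exp (- q j (x n) / \<beta>))\<bar> \<le> (\<Sum>j\<in>UNIV. \<bar>q j (x n)\<bar>)"
          by (rule softmin_bound[OF theta_simplex bpos])
        then show "norm (G i x) \<le> norm (\<Sum>j\<in>UNIV. \<bar>q j (x n)\<bar>)" unfolding G_def by simp
      qed
    qed
    have Hint: "integrable Pn (H i)" if "i \<in> {1..n}" for i
    proof (rule Bochner_Integration.integrable_bound[OF absint[OF that] Hm[OF that]])
      show "AE x in Pn. norm (H i x) \<le> norm (\<Sum>j\<in>UNIV. \<bar>q j (x i)\<bar>)"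
      proof (intro AE_I2)
        fix x
        have "\<bar>\<beta> * ln (\<Sum>j\<in>UNIV. theta_md \<beta> Q x (i - 1) $ j * exp (- q j (x i) / \<beta>))\<bar> \<le> (\<Sum>j\<in>UNIV. \<bar>q j (x i)\<bar>)"
          by (rule softmin_bound[OF theta_simplex bpos])
        then show "norm (H i x) \<le> norm (\<Sum>j\<in>UNIV. \<bar>q j (x i)\<bar>)" unfolding H_def by simp
      qed
    qed
    have jen: "L \<omega> \<le> (\<Sum>i=1..n. G i \<omega>) / real n" for \<omega>
    proof -
      have "(\<Sum>i=1..n. ln (\<Sum>j\<in>UNIV. theta_md \<beta> Q \<omega> (i - 1) $ j * exp (- q j (\<omega> n) / \<beta>))) / real n
         \<le> ln (\<Sum>j\<in>UNIV. ((\<Sum>i=1..n. theta_md \<beta> Q \<omega> (i - 1) $ j) / real n) * exp (- q j (\<omega> n) / \<beta>))"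
        by (rule jensen_ln[OF assms(7) theta_simplex]) simp
      also have "\<dots> = ln (\<Sum>j\<in>UNIV. th \<omega> $ j * exp (- q j (\<omega> n) / \<beta>))"
        unfolding th_def mavg_nth ..
      finally have "- \<beta> * ln (\<Sum>j\<in>UNIV. th \<omega> $ j * exp (- q j (\<omega> n) / \<beta>))
          \<le> - \<beta> * ((\<Sum>i=1..n. ln (\<Sum>j\<in>UNIV. theta_md \<beta> Q \<omega> (i - 1) $ j * exp (- q j (\<omega> n) / \<beta>))) / real n)"
        using bpos by (intro mult_left_mono_neg) auto
      also have "\<dots> = (\<Sum>i=1..n. G i \<omega>) / real n"
        unfolding G_def by (simp add: sum_distrib_left)
      finally show ?thesis unfolding L_def .
    qed
    have c1: "integral\<^sup>L Pn L \<le> integral\<^sup>L Pn (\<lambda>\<omega>. (\<Sum>i=1..n. G i \<omega>) / real n)"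
      by (rule integral_mono[OF Lint _ jen])
        (use Gint in \<open>auto intro!: Bochner_Integration.integrable_sum\<close>)
    have c2: "integral\<^sup>L Pn (\<lambda>\<omega>. (\<Sum>i=1..n. G i \<omega>) / real n) = (\<Sum>i=1..n. integral\<^sup>L Pn (G i)) / real n"
      using Gint by (simp add: Bochner_Integration.integral_sum)
    have c3: "integral\<^sup>L Pn (G i) = integral\<^sup>L Pn (H i)" if "i \<in> {1..n}" for i
    proof -
      have "integral\<^sup>L Pn (G i) = integral\<^sup>L Pn (\<lambda>\<omega>. G i (\<lambda>k\<in>{1..n}. \<omega> (if k = i then n else if k = n then i else k)))"
        unfolding Pn_def by (rule swap_integral[OF assms(1) that]) (use Gm[OF that] Pn_def in simp)
      also have "\<dots> = integral\<^sup>L Pn (H i)"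
      proof (intro Bochner_Integration.integral_cong refl)
        fix \<omega> :: "nat \<Rightarrow> 'z"
        define \<omega>' where "\<omega>' = (\<lambda>k\<in>{1..n}. \<omega> (if k = i then n else if k = n then i else k))"
        have "theta_md \<beta> Q \<omega>' (i - 1) = theta_md \<beta> Q \<omega> (i - 1)"
          by (rule theta_local) (use that in \<open>auto simp: \<omega>'_def\<close>)
        moreover have "\<omega>' n = \<omega> i" using that by (auto simp: \<omega>'_def)
        ultimately show "G i \<omega>' = H i \<omega>" unfolding G_def H_def by simp
      qed
      finally show ?thesis .
    qed
    have tele: "(\<Sum>i=1..n. H i \<omega>) \<le> \<beta> * ln (real CARD('m)) + (\<Sum>k=1..n. q j0 (\<omega> k))" for \<omega>
    proof -
      have "(\<Sum>i=1..n. H i \<omega>) = \<beta> * ln (real CARD('m)) - \<beta> * ln (Dz \<beta> Q \<omega> n)"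
        unfolding H_def q_def by (rule tele_sum[OF bpos])
      also have "\<dots> \<le> \<beta> * ln (real CARD('m)) + zeta Q \<omega> n $ j0"
        using Dz_bound[OF bpos, of Q \<omega> n j0] by simp
      also have "zeta Q \<omega> n $ j0 = (\<Sum>k=1..n. q j0 (\<omega> k))"
        unfolding zeta_def q_def by simp
      finally show ?thesis .
    qed
    have sumint: "integrable Pn (\<lambda>\<omega>. \<Sum>k=1..n. q j0 (\<omega> k))"
      by (rule Bochner_Integration.integrable_sum, rule qint_n) auto
    have c4: "(\<Sum>i=1..n. integral\<^sup>L Pn (H i)) \<le> \<beta> * ln (real CARD('m)) + real n * a j0"
    proof -
      have "(\<Sum>i=1..n. integral\<^sup>L Pn (H i)) = integral\<^sup>L Pn (\<lambda>\<omega>. \<Sum>i=1..n. H i \<omega>)"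
        using Hint by (simp add: Bochner_Integration.integral_sum)
      also have "\<dots> \<le> integral\<^sup>L Pn (\<lambda>\<omega>. \<beta> * ln (real CARD('m)) + (\<Sum>k=1..n. q j0 (\<omega> k)))"
        by (rule integral_mono[OF _ _ tele])
          (use Hint sumint in \<open>auto intro!: Bochner_Integration.integrable_sum\<close>)
      also have "\<dots> = \<beta> * ln (real CARD('m)) + (\<Sum>k=1..n. integral\<^sup>L Pn (\<lambda>\<omega>. q j0 (\<omega> k)))"
        using sumint qint_n by (simp add: Bochner_Integration.integral_sum Pn.prob_space)
      also have "(\<Sum>k=1..n. integral\<^sup>L Pn (\<lambda>\<omega>. q j0 (\<omega> k))) = (\<Sum>k=1..n. a j0)"
      proof (rule sum.cong[OF refl])
        fix k assume "k \<in> {1..n}"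
        then show "integral\<^sup>L Pn (\<lambda>\<omega>. q j0 (\<omega> k)) = a j0"
          unfolding Pn_def a_def by (rule comp_integrable(2)[OF assms(1) qint])
      qed
      finally show ?thesis by simp
    qed
    have c5: "(\<Sum>i=1..n. integral\<^sup>L Pn (G i)) = (\<Sum>i=1..n. integral\<^sup>L Pn (H i))"
      by (rule sum.cong[OF refl c3])
    have "integral\<^sup>L Pn L \<le> (\<Sum>i=1..n. integral\<^sup>L Pn (H i)) / real n"
      using c1 unfolding c2 c5 .
    also have "\<dots> \<le> (\<beta> * ln (real CARD('m)) + real n * a j0) / real n"
      using c4 assms(7) by (intro divide_right_mono) auto
    also have "\<dots> = a j0 + \<beta> * ln (real CARD('m)) / real n"
      using assms(7) by (simp add: field_simps)
    finally show ?thesis .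
  qed

  have "eexp Xn (\<lambda>\<omega>. risk P Q (th \<omega>))
     \<le> ereal (integral\<^sup>L Pn L) + ereal \<beta> * eexp Pn (\<lambda>\<omega>. ereal (S \<omega>))"
    using stepA stepB by (rule order_trans)
  also have "\<dots> \<le> ereal (a j0 + \<beta> * ln (real CARD('m)) / real n) + ereal \<beta> * eexp Pn (\<lambda>\<omega>. ereal (S \<omega>))"
    by (intro add_right_mono) (simp add: stepC)
  also have "\<dots> = (MIN j\<in>UNIV. risk P Q (axis j 1)) + ereal (\<beta> * ln (real CARD('m)) / real n)
      + ereal \<beta> * eexp Pn (\<lambda>\<omega>. ereal (S \<omega>))"
    unfolding j0 unfolding risk_e by simp
  finally show ?thesis unfolding Xn_def Pn_def th_def S_def .
qed


end
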